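(* Let $q$ be a prime power, let $n>1$ and $k\ge 1$ be integers with $\gcd(n,k)=1$, and let $f(x)$ be an irreducible polynomial of degree $n$ over $\mathbb{F}_q$. Let $\alpha,\beta\in\mathbb{F}_{q^k}$ with $\alpha\neq 0$, and set $g(x):=f(\alpha x+\beta)\in\mathbb{F}_{q^k}[x]$. Then the polynomial $$F(x)=\prod_{a=0}^{k-1} g^{(a)}(x),$$ which has degree $nk$ and coefficients in $\mathbb{F}_q$, is irreducible over $\mathbb{F}_q$ if and only if $\mathbb{F}_q(\alpha,\beta)=\mathbb{F}_{q^k}$.
   Context: For a polynomial $g(x)=\sum_{u=0}^{m} b_u x^u$ with coefficients in $\mathbb{F}_{q^k}$ and an integer $a\ge 0$, write $g^{(a)}(x)=\sum_{u=0}^{m} b_u^{q^a}x^u$. $\mathbb{F}_q(\alpha,\beta)$ denotes the smallest subfield of $\mathbb{F}_{q^k}$ containing $\mathbb{F}_q$, $\alpha$ and $\beta$. *)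

theory Defs
  imports "HOL-Computational_Algebra.Computational_Algebra" "HOL-Library.Cardinality"
begin

definition is_subfield :: "'b::field set \<Rightarrow> bool" where
  "is_subfield K \<longleftrightarrow> 0 \<in> K \<and> 1 \<in> K \<and>
     (\<forall>x\<in>K. \<forall>y\<in>K. x + y \<in> K \<and> x * y \<in> K) \<and>
     (\<forall>x\<in>K. - x \<in> K \<and> inverse x \<in> K)"

definition gen_subfield :: "'b::field set \<Rightarrow> 'b set" where
  "gen_subfield S = \<Inter> {K. is_subfield K \<and> S \<subseteq> K}"

definition frob_poly :: "nat \<Rightarrow> nat \<Rightarrow> 'b::field poly \<Rightarrow> 'b poly" where
  "frob_poly q a g = map_poly (\<lambda>c. c ^ (q ^ a)) g"

end

theory Submission imports Defs "HOL-Algebra.Algebraic_Closure_Type" begin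
hide_const (open) up_ring.coeff up_ring.monom Module.smult Polynomials.degree Divisibility.irreducible Divisibility.prime

definition rhom :: "('x::comm_ring_1 \<Rightarrow> 'y::comm_ring_1) \<Rightarrow> bool" where
  "rhom h \<longleftrightarrow> (\<forall>x y. h (x + y) = h x + h y) \<and> (\<forall>x y. h (x * y) = h x * h y) \<and> h 1 = 1"

context fixes h :: "'x::comm_ring_1 \<Rightarrow> 'y::comm_ring_1" assumes h: "rhom h"
begin
lemma rh_add: "h (x + y) = h x + h y" using h by (simp add: rhom_def)
lemma rh_mult: "h (x * y) = h x * h y" using h by (simp add: rhom_def)
lemma rh_one: "h 1 = 1" using h by (simp add: rhom_def)
lemma rh_zero: "h 0 = 0"
proof -
  have "h (0 + 0) = h 0 + h 0" by (rule rh_add)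
  thus ?thesis by simp
qed
lemma rh_uminus: "h (- x) = - h x"
proof -
  have "h (x + - x) = h x + h (- x)" by (rule rh_add)
  thus ?thesis by (simp add: rh_zero eq_neg_iff_add_eq_0 add.commute)
qed
lemma rh_diff: "h (x - y) = h x - h y"
  using rh_add[of x "-y"] by (simp add: rh_uminus)
lemma rh_power: "h (x ^ n) = h x ^ n"
  by (induction n) (simp_all add: rh_one rh_mult)
lemma rh_sum: "h (sum f A) = (\<Sum>a\<in>A. h (f a))"
  by (induction A rule: infinite_finite_induct) (simp_all add: rh_zero rh_add)
lemma rh_prod: "h (prod f A) = (\<Prod>a\<in>A. h (f a))"
  by (induction A rule: infinite_finite_induct) (simp_all add: rh_one rh_mult)
lemma rh_of_nat: "h (of_nat n) = of_nat n"
  by (induction n) (simp_all add: rh_zero rh_one rh_add)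

lemma map_poly_add_rh: "map_poly h (p + q) = map_poly h p + map_poly h q"
  by (rule poly_eqI) (simp add: coeff_map_poly rh_zero rh_add)
lemma map_poly_mult_rh: "map_poly h (p * q) = map_poly h p * map_poly h q"
  by (rule poly_eqI) (simp add: coeff_map_poly rh_zero coeff_mult rh_sum rh_mult)
lemma map_poly_one_rh: "map_poly h 1 = 1"
  by (simp add: rh_one)
lemma map_poly_const_rh: "map_poly h [:c:] = [:h c:]"
  by (simp add: rh_zero map_poly_pCons)
lemma map_poly_pCons_rh: "map_poly h (pCons c p) = pCons (h c) (map_poly h p)"
  by (rule poly_eqI) (simp add: coeff_map_poly rh_zero coeff_pCons split: nat.split)
lemma map_poly_power_rh: "map_poly h (p ^ n) = map_poly h p ^ n"
  by (induction n) (simp_all add: map_poly_one_rh map_poly_mult_rh)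
lemma map_poly_prod_rh: "map_poly h (prod f A) = (\<Prod>a\<in>A. map_poly h (f a))"
  by (induction A rule: infinite_finite_induct) (simp_all add: map_poly_one_rh map_poly_mult_rh)
lemma map_poly_smult_rh: "map_poly h (smult c p) = smult (h c) (map_poly h p)"
  by (rule poly_eqI) (simp add: coeff_map_poly rh_zero rh_mult)
lemma poly_map_poly_rh: "poly (map_poly h p) (h x) = h (poly p x)"
  by (induction p) (simp_all add: map_poly_pCons_rh rh_add rh_mult rh_zero)
lemma map_poly_pcompose_rh: "map_poly h (pcompose p r) = pcompose (map_poly h p) (map_poly h r)"
  by (induction p) (simp_all add: map_poly_pCons_rh pcompose_pCons map_poly_add_rh map_poly_mult_rh
      map_poly_const_rh rh_zero)
end

lemma rhom_comp: "rhom h \<Longrightarrow> rhom k \<Longrightarrow> rhom (h \<circ> k)"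
  by (simp add: rhom_def)


lemma rhom_inj:
  fixes h :: "'x::field \<Rightarrow> 'y::idom"
  assumes h: "rhom h" shows "inj h"
proof (rule injI, rule ccontr)
  fix x y assume e: "h x = h y" and ne: "x \<noteq> y"
  have "h ((x - y) * inverse (x - y)) = h 1" using ne by simp
  hence "h (x - y) * h (inverse (x - y)) = 1" by (simp add: rh_mult[OF h] rh_one[OF h])
  thus False using e by (simp add: rh_diff[OF h])
qed

lemma pow_card_ff: "(x::'x::{field,finite}) ^ CARD('x) = x"
proof (cases "x = 0")
  case False
  have "x * (\<Prod>y\<in>UNIV-{0}. x * y) = x * x ^ (card (UNIV :: 'x set) - 1) * \<Prod>(UNIV-{0})"
    by (simp add: prod.distrib mult_ac)
  also have "x * x ^ (card (UNIV :: 'x set) - 1) = x ^ Suc (card (UNIV :: 'x set) - 1)"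
    by (subst power_Suc) auto
  also have "Suc (card (UNIV :: 'x set) - 1) = card (UNIV :: 'x set)"
    using finite_UNIV_card_ge_0[where ?'a = 'x] by simp
  also have "(\<Prod>y\<in>UNIV-{0}. x * y) = (\<Prod>y\<in>UNIV-{0}. y)"
    by (rule prod.reindex_bij_witness[of _ "\<lambda>y. y / x" "\<lambda>y. x * y"]) (use False in auto)
  finally show ?thesis
    by simp
qed (use finite_UNIV_card_ge_0[where ?'a = 'x] in auto)

lemma pow_card_pow_ff: "(x::'x::{field,finite}) ^ (CARD('x) ^ n) = x"
  by (induction n) (simp_all add: pow_card_ff power_mult)

lemma card_ge2_ff: "CARD('x::{field,finite}) \<ge> 2"
proof -
  have "{0::'x, 1} \<subseteq> UNIV" by simp
  hence "card {0::'x, 1} \<le> CARD('x)" by (intro card_mono) auto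
  thus ?thesis by simp
qed

lemma choose_zero_ff:
  assumes "0 < i" "i < CARD('x::{field,finite})"
  shows "of_nat (CARD('x) choose i) = (0::'x)"
proof -
  define q where "q = CARD('x)"
  have q2: "q \<ge> 2" unfolding q_def by (rule card_ge2_ff)
  define p1 :: "'x poly" where "p1 = [:1,1:] ^ q"
  define p2 :: "'x poly" where "p2 = monom 1 q + 1"
  have "p1 = p2"
  proof (rule poly_eqI_degree_lead_coeff[where n = q and A = UNIV])
    show "coeff p1 q = coeff p2 q" using q2 unfolding p1_def p2_def
      by (simp add: coeff_linear_power)
    show "q \<le> card (UNIV :: 'x set)" by (simp add: q_def)
    show "degree p1 \<le> q" unfolding p1_def
      by (rule order.trans[OF degree_power_le]) simp
    show "degree p2 \<le> q" unfolding p2_def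
      by (rule order.trans[OF degree_add_le_max]) (simp add: degree_monom_eq)
    fix z :: 'x
    show "poly p1 z = poly p2 z" unfolding p1_def p2_def q_def
      by (simp add: poly_monom pow_card_ff add.commute)
  qed
  hence "coeff p1 i = coeff p2 i" by simp
  thus ?thesis using assms unfolding p1_def p2_def q_def
    by (simp add: coeff_linear_poly_power coeff_monom)
qed

lemma add_pow_Z:
  fixes x y :: "'y::comm_ring_1"
  assumes Z: "\<And>i. 0 < i \<Longrightarrow> i < q \<Longrightarrow> of_nat (q choose i) = (0::'y)" and q: "q > 0"
  shows "(x + y) ^ q = x ^ q + y ^ q"
proof -
  have "(x + y) ^ q = (\<Sum>k\<le>q. of_nat (q choose k) * x ^ k * y ^ (q - k))"
    by (rule binomial_ring)
  also have "\<dots> = (\<Sum>k\<in>{0,q}. of_nat (q choose k) * x ^ k * y ^ (q - k))"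
  proof (intro sum.mono_neutral_right ballI)
    fix k assume "k \<in> {..q} - {0, q}"
    hence "0 < k" "k < q" by auto
    thus "of_nat (q choose k) * x ^ k * y ^ (q - k) = 0" using Z by simp
  qed auto
  finally show ?thesis using q by (simp add: add_ac)
qed

lemma rhom_pow_Z:
  fixes q :: nat
  assumes Z: "\<And>i. 0 < i \<Longrightarrow> i < q \<Longrightarrow> of_nat (q choose i) = (0::'y::comm_ring_1)" and q: "q > 0"
  shows "rhom (\<lambda>x::'y. x ^ (q ^ j))"
proof (induction j)
  case 0 thus ?case by (simp add: rhom_def)
next
  case (Suc j)
  have e: "(\<lambda>x::'y. x ^ (q ^ Suc j)) = (\<lambda>x. x ^ q) \<circ> (\<lambda>x. x ^ (q ^ j))"
    by (auto simp: power_mult[symmetric] mult.commute)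
  have "rhom (\<lambda>x::'y. x ^ q)" unfolding rhom_def
    by (simp add: add_pow_Z[OF Z q] power_mult_distrib)
  thus ?case unfolding e by (rule rhom_comp) (rule Suc)
qed

lemma fixed_range:
  fixes h :: "'x::{field,finite} \<Rightarrow> 'y::idom"
  assumes h: "rhom h"
  shows "{z. z ^ CARD('x) = z} = range h"
proof -
  define q where "q = CARD('x)"
  have q2: "q \<ge> 2" unfolding q_def by (rule card_ge2_ff)
  have sub: "range h \<subseteq> {z. z ^ q = z}"
    by (auto simp: q_def rh_power[OF h, symmetric] pow_card_ff)
  define P :: "'y poly" where "P = monom 1 q - [:0,1:]"
  have cP: "coeff P q = 1" using q2 by (simp add: P_def coeff_pCons split: nat.split)
  hence P0: "P \<noteq> 0" by auto
  have dP: "degree P \<le> q" unfolding P_def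
    by (rule order.trans[OF degree_diff_le_max]) (use q2 in \<open>auto simp: degree_monom_eq\<close>)
  have rt: "{z::'y. z ^ q = z} = {z. poly P z = 0}" by (simp add: P_def poly_monom)
  have fin: "finite {z::'y. z ^ q = z}" using poly_roots_finite[OF P0] rt by simp
  have "card {z::'y. z ^ q = z} \<le> q" using rt card_poly_roots_bound[OF P0] dP by (simp only: rt)
  moreover have "card (range h) = q" unfolding q_def using rhom_inj[OF h]
    by (simp add: card_image)
  ultimately have "card (range h) = card {z::'y. z ^ q = z}"
    using card_mono[OF fin sub] by linarith
  hence "range h = {z. z ^ q = z}"
    using card_subset_eq[OF fin sub] by simp
  thus ?thesis by (simp add: q_def)
qed



lemma roots_pow_bound:
  assumes N: "N \<ge> 2"
  shows "finite {z::'y::idom. z ^ N = z} \<and> card {z::'y. z ^ N = z} \<le> N"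
proof -
  define P :: "'y poly" where "P = monom 1 N - [:0,1:]"
  have cP: "coeff P N = 1" using N by (simp add: P_def coeff_pCons split: nat.split)
  hence P0: "P \<noteq> 0" by auto
  have dP: "degree P \<le> N" unfolding P_def
    by (rule order.trans[OF degree_diff_le_max]) (use N in \<open>auto simp: degree_monom_eq\<close>)
  have rt: "{z::'y. z ^ N = z} = {z. poly P z = 0}" by (simp add: P_def poly_monom)
  show ?thesis using poly_roots_finite[OF P0] card_poly_roots_bound[OF P0] dP
    by (simp only: rt) simp
qed

lemma subfield_pow_card:
  fixes K :: "'b::field set"
  assumes K: "is_subfield K" and fin: "finite K" and x: "x \<in> K"
  shows "x ^ card K = x"
proof (cases "x = 0")
  case True
  have "0 \<in> K" using K by (simp add: is_subfield_def)
  hence "card K > 0" using fin by (auto simp: card_gt_0_iff)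
  thus ?thesis using True by simp
next
  case False
  have cl: "\<And>y z. y \<in> K \<Longrightarrow> z \<in> K \<Longrightarrow> y * z \<in> K" and ci: "\<And>y. y \<in> K \<Longrightarrow> inverse y \<in> K"
    using K by (auto simp: is_subfield_def)
  have "(\<Prod>y\<in>K-{0}. x * y) = (\<Prod>y\<in>K-{0}. y)"
    by (rule prod.reindex_bij_witness[of _ "\<lambda>y. y / x" "\<lambda>y. x * y"])
       (use False x cl ci in \<open>auto simp: divide_inverse\<close>)
  hence "x ^ card (K - {0}) * (\<Prod>y\<in>K-{0}. y) = 1 * (\<Prod>y\<in>K-{0}. y)"
    by (simp add: prod.distrib)
  moreover have "(\<Prod>y\<in>K-{0}. y) \<noteq> 0" using fin by simp
  ultimately have "x ^ card (K - {0}) = 1" by (metis mult_right_cancel)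
  moreover have "card K = Suc (card (K - {0}))"
  proof -
    have "0 \<in> K" using K by (simp add: is_subfield_def)
    hence "card K > 0" "card (K - {0}) = card K - 1" using fin by (auto simp: card_gt_0_iff)
    thus ?thesis by simp
  qed
  ultimately show ?thesis by simp
qed


lemma descend_gen:
  fixes h :: "'x::{field,finite} \<Rightarrow> 'y::idom" and p :: "'y poly"
  assumes h: "rhom h" and c: "\<And>i. coeff p i ^ CARD('x) = coeff p i"
  shows "\<exists>p0. map_poly h p0 = p"
proof -
  have fr: "{z::'y. z ^ CARD('x) = z} = range h" by (rule fixed_range[OF h])
  have inv0: "inv_into UNIV h 0 = 0" using rh_zero[OF h] rhom_inj[OF h] by (metis inv_f_f)
  have "map_poly h (map_poly (inv_into UNIV h) p) = p"
  proof (rule poly_eqI)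
    fix i
    have "coeff p i \<in> range h" using c[of i] fr by blast
    thus "coeff (map_poly h (map_poly (inv_into UNIV h) p)) i = coeff p i"
      by (simp add: coeff_map_poly rh_zero[OF h] inv0 f_inv_into_f)
  qed
  thus ?thesis by blast
qed

lemma pow_inj_gen:
  fixes z w :: "'y::idom"
  assumes h: "rhom (\<lambda>x::'y. x ^ N)" and N: "N > 0" and e: "z ^ N = w ^ N"
  shows "z = w"
proof -
  have "(z - w) ^ N = 0" using rh_diff[OF h, of z w] e by simp
  thus ?thesis using N by simp
qed

locale ffs =
  fixes emb :: "'a::{field,finite} \<Rightarrow> 'b::{field,finite}"
    and f :: "'a poly" and n k :: nat and \<alpha> \<beta> :: 'b
  assumes emb_add: "\<And>x y. emb (x + y) = emb x + emb y"
    and emb_mult: "\<And>x y. emb (x * y) = emb x * emb y"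
    and emb_one: "emb 1 = 1"
    and card_b: "CARD('b) = CARD('a) ^ k"
    and n_gt: "n > 1" and k_ge: "k \<ge> 1" and cop: "coprime n k"
    and irr: "irreducible f" and deg: "degree f = n"
    and alpha_nz: "\<alpha> \<noteq> 0"
begin

definition g where "g = pcompose (map_poly emb f) [:\<beta>, \<alpha>:]"
definition fr where "fr a = frob_poly CARD('a) a g"
definition Fb where "Fb = (\<Prod>a<k. fr a)"
definition P where "P \<longleftrightarrow> (\<exists>m. 0 < m \<and> m < k \<and> \<alpha> ^ (CARD('a) ^ m) = \<alpha> \<and> \<beta> ^ (CARD('a) ^ m) = \<beta>)"

lemma emb_rhom: "rhom emb" unfolding rhom_def using emb_add emb_mult emb_one by blast
lemma emb_inj: "inj emb" by (rule rhom_inj[OF emb_rhom])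
lemma emb_0: "emb 0 = 0" by (rule rh_zero[OF emb_rhom])
lemma emb_eq0: "emb x = 0 \<longleftrightarrow> x = 0"
  using emb_inj emb_0 by (metis injD)

lemma q2: "CARD('a) \<ge> 2" by (rule card_ge2_ff)
lemma q0: "CARD('a) > 0" using q2 by simp

lemma Zb: "0 < i \<Longrightarrow> i < CARD('a) \<Longrightarrow> of_nat (CARD('a) choose i) = (0::'b)"
  using choose_zero_ff[of i, where 'x='a] rh_of_nat[OF emb_rhom, of "CARD('a) choose i"] by (simp add: emb_0)

lemma frob_rhom: "rhom (\<lambda>x::'b. x ^ (CARD('a) ^ j))"
  by (rule rhom_pow_Z[OF Zb q0])

lemma pow_qk: "(x::'b) ^ (CARD('a) ^ k) = x"
  using pow_card_ff[of x] by (simp add: card_b)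

lemma pow_qkt: "(x::'b) ^ (CARD('a) ^ (k * t)) = x"
  by (induction t) (simp_all add: power_add power_mult pow_qk)

lemma pow_q_add: "(x::'b) ^ (CARD('a) ^ (a + b)) = (x ^ (CARD('a) ^ a)) ^ (CARD('a) ^ b)"
  by (simp add: power_add power_mult)

lemma pow_emb: "emb c ^ (CARD('a) ^ j) = emb c"
  by (simp add: rh_power[OF emb_rhom, symmetric] pow_card_pow_ff)

lemma deg_map_emb: "degree (map_poly emb p) = degree p"
  by (rule degree_map_poly) (simp add: emb_eq0)

lemma map_emb_inj: "map_poly emb p = map_poly emb r \<Longrightarrow> p = r"
proof (rule poly_eqI)
  fix i assume "map_poly emb p = map_poly emb r"
  hence "coeff (map_poly emb p) i = coeff (map_poly emb r) i" by simp
  hence "emb (coeff p i) = emb (coeff r i)" by (simp add: coeff_map_poly emb_0)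
  thus "coeff p i = coeff r i" using emb_inj by (simp add: inj_eq)
qed

lemma deg_g: "degree g = n"
  by (simp add: g_def degree_pcompose deg_map_emb deg alpha_nz)

lemma g_nz: "g \<noteq> 0" using deg_g n_gt by auto

lemma fr_def2: "fr a = map_poly (\<lambda>c. c ^ (CARD('a) ^ a)) g"
  by (simp add: fr_def frob_poly_def)

lemma deg_fr: "degree (fr a) = n"
  unfolding fr_def2 by (subst degree_map_poly) (simp_all add: deg_g)

lemma fr_nz: "fr a \<noteq> 0" using deg_fr[of a] n_gt by auto

lemma fr_0: "fr 0 = g" by (simp add: fr_def2)

lemma fr_k: "fr k = g" by (simp add: fr_def2 pow_qk)

lemma map_fr: "map_poly (\<lambda>c. c ^ (CARD('a) ^ j)) (fr a) = fr (a + j)"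
  unfolding fr_def2 by (subst map_poly_map_poly) (simp_all add: o_def pow_q_add)

lemma prod_inv:
  assumes "fr d = g"
  shows "map_poly (\<lambda>c. c ^ CARD('a)) (\<Prod>a<d. fr a) = (\<Prod>a<d. fr a)"
proof -
  have h: "rhom (\<lambda>c::'b. c ^ CARD('a))" using frob_rhom[of 1] by simp
  have "map_poly (\<lambda>c. c ^ CARD('a)) (\<Prod>a<d. fr a) = (\<Prod>a<d. fr (Suc a))"
    using map_fr[of 1] by (simp add: map_poly_prod_rh[OF h])
  also have "\<dots> = (\<Prod>a<d. fr a)"
  proof (cases d)
    case 0 thus ?thesis by simp
  next
    case (Suc d')
    have "(\<Prod>a<d. fr (Suc a)) = (\<Prod>a<d'. fr (Suc a)) * fr (Suc d')"
      by (simp add: Suc)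
    also have "\<dots> = fr 0 * (\<Prod>a<d'. fr (Suc a))"
      using assms by (simp add: Suc fr_0 mult.commute)
    also have "\<dots> = (\<Prod>a<d. fr a)"
      by (simp only: Suc prod.lessThan_Suc_shift)
    finally show ?thesis .
  qed
  finally show ?thesis .
qed

lemma descend:
  fixes p :: "'b poly"
  assumes "\<And>i. coeff p i ^ CARD('a) = coeff p i"
  shows "\<exists>p0. map_poly emb p0 = p"
proof -
  have fr: "{z::'b. z ^ CARD('a) = z} = range emb" by (rule fixed_range[OF emb_rhom])
  have inv0: "inv_into UNIV emb 0 = 0" using emb_0 emb_inj by (metis inv_f_f)
  have "map_poly emb (map_poly (inv_into UNIV emb) p) = p"
  proof (rule poly_eqI)
    fix i
    have "coeff p i \<in> range emb" using assms[of i] fr by blast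
    thus "coeff (map_poly emb (map_poly (inv_into UNIV emb) p)) i = coeff p i"
      by (simp add: coeff_map_poly emb_0 inv0 f_inv_into_f)
  qed
  thus ?thesis by blast
qed

lemma inv_coeffs:
  fixes p :: "'b poly"
  assumes "map_poly (\<lambda>c. c ^ CARD('a)) p = p"
  shows "coeff p i ^ CARD('a) = coeff p i"
proof -
  have "coeff (map_poly (\<lambda>c. c ^ CARD('a)) p) i = coeff p i" using assms by simp
  moreover have "coeff (map_poly (\<lambda>c. c ^ CARD('a)) p) i = coeff p i ^ CARD('a)"
    by (rule coeff_map_poly) (rule zero_power[OF q0])
  ultimately show ?thesis by simp
qed

lemma Fb_descend: "\<exists>F0. map_poly emb F0 = Fb"
  unfolding Fb_def by (rule descend, rule inv_coeffs, rule prod_inv[OF fr_k])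

lemma deg_Fb: "degree Fb = n * k"
  unfolding Fb_def by (subst degree_prod_eq_sum_degree) (simp_all add: fr_nz deg_fr)

lemma Fb_nz: "Fb \<noteq> 0" unfolding Fb_def using fr_nz by simp


definition L where "L = gen_subfield (range emb \<union> {\<alpha>, \<beta>})"

lemma pow_fix_subfield: "is_subfield {x::'b. x ^ (CARD('a) ^ m) = x}"
proof -
  have h: "rhom (\<lambda>x::'b. x ^ (CARD('a) ^ m))" by (rule frob_rhom)
  show ?thesis unfolding is_subfield_def
    using rh_add[OF h] rh_mult[OF h] rh_uminus[OF h] rh_zero[OF h] rh_one[OF h]
    by (auto simp: power_inverse)
qed

lemma L_sub: "is_subfield K \<Longrightarrow> range emb \<subseteq> K \<Longrightarrow> \<alpha> \<in> K \<Longrightarrow> \<beta> \<in> K \<Longrightarrow> L \<subseteq> K"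
  unfolding L_def gen_subfield_def by blast

lemma Inter_subfield: "\<forall>K\<in>F. is_subfield K \<Longrightarrow> is_subfield (\<Inter>F)"
  unfolding is_subfield_def by auto

lemma L_subfield: "is_subfield L"
  unfolding L_def gen_subfield_def by (rule Inter_subfield) auto

lemma L_gens: "range emb \<subseteq> L" "\<alpha> \<in> L" "\<beta> \<in> L"
  unfolding L_def gen_subfield_def by blast+

lemma P_imp: assumes "P" shows "L \<noteq> UNIV"
proof
  assume LU: "L = UNIV"
  from assms obtain m where m: "0 < m" "m < k" "\<alpha> ^ (CARD('a) ^ m) = \<alpha>" "\<beta> ^ (CARD('a) ^ m) = \<beta>"
    unfolding P_def by blast
  have "L \<subseteq> {x::'b. x ^ (CARD('a) ^ m) = x}"
    by (rule L_sub[OF pow_fix_subfield]) (use m pow_emb in auto)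
  hence U: "{x::'b. x ^ (CARD('a) ^ m) = x} = UNIV" using LU by blast
  have N2: "CARD('a) ^ m \<ge> 2"
  proof -
    have "CARD('a) ^ 1 \<le> CARD('a) ^ m" using q2 m(1) by (intro power_increasing) auto
    thus ?thesis using q2 by simp
  qed
  have "card {x::'b. x ^ (CARD('a) ^ m) = x} \<le> CARD('a) ^ m"
    using roots_pow_bound[OF N2] by blast
  hence "CARD('a) ^ k \<le> CARD('a) ^ m" using U card_b by simp
  moreover have "CARD('a) ^ m < CARD('a) ^ k"
    using q2 m(2) by (intro power_strict_increasing) auto
  ultimately show False by simp
qed

lemma card_subfield:
  assumes K: "is_subfield K" and E: "range emb \<subseteq> K"
  shows "\<exists>d. card K = CARD('a) ^ d"
proof -
  interpret V: vector_space "\<lambda>(c::'a) (x::'b). emb c * x"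
    by unfold_locales (simp_all add: emb_add emb_mult emb_one distrib_left distrib_right mult.assoc)
  have Kp: "0 \<in> K" "\<And>x y. x \<in> K \<Longrightarrow> y \<in> K \<Longrightarrow> x + y \<in> K"
      "\<And>x y. x \<in> K \<Longrightarrow> y \<in> K \<Longrightarrow> x * y \<in> K"
    using K unfolding is_subfield_def by blast+
  have sK: "V.subspace K"
    unfolding V.subspace_def
  proof (intro conjI ballI allI)
    fix c x assume "x \<in> K"
    moreover have "emb c \<in> K" using E by blast
    ultimately show "emb c * x \<in> K" using Kp(3) by blast
  qed (use Kp in auto)
  obtain B where B: "B \<subseteq> K" "V.independent B" "K \<subseteq> V.span B" "card B = V.dim K"
    by (rule V.basis_exists[of K])
  have fB: "finite B" by simp
  have KB: "K = V.span B" using V.span_minimal[OF B(1) sK] B(3) by blast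
  define \<Phi> where "\<Phi> = (\<lambda>u. \<Sum>v\<in>B. emb (u v) * v)"
  have sp: "V.span B = range \<Phi>" unfolding \<Phi>_def by (rule V.span_finite[OF fB])
  have img: "\<Phi> ` (PiE B (\<lambda>_. UNIV)) = range \<Phi>"
  proof
    show "range \<Phi> \<subseteq> \<Phi> ` (PiE B (\<lambda>_. UNIV))"
    proof
      fix y assume "y \<in> range \<Phi>"
      then obtain u where y: "y = \<Phi> u" by blast
      have "\<Phi> (restrict u B) = \<Phi> u" unfolding \<Phi>_def by (intro sum.cong) auto
      moreover have "restrict u B \<in> PiE B (\<lambda>_. UNIV)" by simp
      ultimately show "y \<in> \<Phi> ` (PiE B (\<lambda>_. UNIV))" using y by (metis image_eqI)
    qed
  qed auto
  have inj: "inj_on \<Phi> (PiE B (\<lambda>_. UNIV))"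
  proof (rule inj_onI)
    fix u u' assume u: "u \<in> PiE B (\<lambda>_. UNIV)" and u': "u' \<in> PiE B (\<lambda>_. UNIV)" and e: "\<Phi> u = \<Phi> u'"
    have "(\<Sum>v\<in>B. emb (u v - u' v) * v) = \<Phi> u - \<Phi> u'"
      unfolding \<Phi>_def by (simp add: sum_subtractf rh_diff[OF emb_rhom] algebra_simps)
    also have "\<dots> = 0" using e by simp
    finally have z: "(\<Sum>v\<in>B. emb (u v - u' v) * v) = 0" .
    have "\<forall>v\<in>B. u v - u' v = 0"
      using V.independentD[OF B(2) fB order_refl, of "\<lambda>v. u v - u' v"] z by simp
    thus "u = u'" using u u' by (intro PiE_ext) auto
  qed
  have "card K = card (PiE B (\<lambda>_::'b. UNIV :: 'a set))"
    unfolding KB sp img[symmetric] by (rule card_image[OF inj])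
  also have "\<dots> = CARD('a) ^ card B" by (simp add: card_PiE fB)
  finally show ?thesis by blast
qed

lemma notP_imp: assumes "L \<noteq> UNIV" shows "P"
proof -
  obtain d where d: "card L = CARD('a) ^ d" using card_subfield[OF L_subfield L_gens(1)] by blast
  have "card L < CARD('b)" using assms by (intro psubset_card_mono) auto
  hence "CARD('a) ^ d < CARD('a) ^ k" using d card_b by simp
  hence dk: "d < k" using q2 by (simp add: power_less_imp_less_exp)
  have "{0, 1} \<subseteq> L" using L_subfield by (simp add: is_subfield_def)
  hence "card {0::'b, 1} \<le> card L" by (intro card_mono) auto
  hence "d \<noteq> 0" using d by (cases d) auto
  moreover have "\<alpha> ^ (CARD('a) ^ d) = \<alpha>" "\<beta> ^ (CARD('a) ^ d) = \<beta>"
    using subfield_pow_card[OF L_subfield _ L_gens(2)] subfield_pow_card[OF L_subfield _ L_gens(3)] d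
    by auto
  ultimately show ?thesis unfolding P_def using dk by blast
qed

lemma L_iff: "L = UNIV \<longleftrightarrow> \<not> P"
  using P_imp notP_imp by blast


lemma pow_iter: "(x::'b) ^ (CARD('a) ^ m) = x \<Longrightarrow> x ^ (CARD('a) ^ (m * t)) = x"
  by (induction t) (simp_all add: power_add power_mult)

lemma gcd_fix:
  assumes m: "0 < m" and x: "(x::'b) ^ (CARD('a) ^ m) = x"
  shows "x ^ (CARD('a) ^ gcd m k) = x"
proof -
  obtain a b where ab: "m * a = k * b + gcd m k" using bezout_nat[of m k] m by auto
  have "x = x ^ (CARD('a) ^ (m * a))" using pow_iter[OF x] by simp
  also have "\<dots> = (x ^ (CARD('a) ^ (k * b))) ^ (CARD('a) ^ gcd m k)"
    unfolding ab pow_q_add ..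
  also have "\<dots> = x ^ (CARD('a) ^ gcd m k)" by (simp only: pow_qkt)
  finally show ?thesis by simp
qed

lemma fr_period:
  assumes a: "\<alpha> ^ (CARD('a) ^ d) = \<alpha>" and b: "\<beta> ^ (CARD('a) ^ d) = \<beta>"
  shows "fr d = g"
proof -
  have h: "rhom (\<lambda>x::'b. x ^ (CARD('a) ^ d))" by (rule frob_rhom)
  have "fr d = map_poly (\<lambda>c. c ^ (CARD('a) ^ d)) g" by (rule fr_def2)
  also have "\<dots> = pcompose (map_poly (\<lambda>c. c ^ (CARD('a) ^ d)) (map_poly emb f))
       (map_poly (\<lambda>c. c ^ (CARD('a) ^ d)) [:\<beta>, \<alpha>:])"
    unfolding g_def by (rule map_poly_pcompose_rh[OF h])
  also have "map_poly (\<lambda>c. c ^ (CARD('a) ^ d)) (map_poly emb f) = map_poly emb f"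
    by (subst map_poly_map_poly) (simp_all add: o_def pow_emb emb_0)
  also have "map_poly (\<lambda>c. c ^ (CARD('a) ^ d)) [:\<beta>, \<alpha>:] = [:\<beta>, \<alpha>:]"
    by (simp add: map_poly_pCons_rh[OF h] rh_zero[OF h] a b)
  finally show ?thesis by (simp add: g_def)
qed

lemma fr_mult_period:
  assumes "fr d = g" shows "fr (d * t + r) = fr r"
proof -
  have "fr (d * t) = g"
  proof (induction t)
    case 0 thus ?case by (simp add: fr_0)
  next
    case (Suc t)
    have "fr (d * Suc t) = map_poly (\<lambda>c. c ^ (CARD('a) ^ d)) (fr (d * t))"
      using map_fr[of d "d * t"] by (simp add: add.commute)
    also have "\<dots> = fr d" using Suc by (simp add: map_fr fr_0[symmetric])
    finally show ?case using assms by simp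
  qed
  thus ?thesis using map_fr[of r "d * t"] by (simp add: fr_0[symmetric] map_fr)
qed

lemma not_irr_pow:
  fixes H :: "'a poly"
  assumes "degree H > 0" "t \<ge> 2"
  shows "\<not> irreducible (H ^ t)"
proof
  assume irr: "irreducible (H ^ t)"
  have H0: "H \<noteq> 0" using assms by auto
  have e: "H ^ t = H * H ^ (t - 1)" using assms(2) by (cases t) auto
  have "\<not> is_unit H" using H0 assms(1) by (simp add: is_unit_iff_degree)
  moreover have "\<not> is_unit (H ^ (t - 1))"
    using H0 assms by (simp add: is_unit_iff_degree degree_power_eq)
  ultimately show False using Factorial_Ring.irreducibleD[OF irr e] by blast
qed

lemma P_red:
  assumes F0: "map_poly emb F0 = Fb" and P: "P"
  shows "\<not> irreducible F0"
proof -
  from P obtain m where m: "0 < m" "m < k" "\<alpha> ^ (CARD('a) ^ m) = \<alpha>" "\<beta> ^ (CARD('a) ^ m) = \<beta>"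
    unfolding P_def by blast
  define d where "d = gcd m k"
  have d0: "d > 0" using m by (simp add: d_def)
  have "gcd m k \<le> m" using m(1) by (intro gcd_le1_nat) simp
  hence dk: "d < k" using m(2) by (simp add: d_def)
  have ddvd: "d dvd k" by (simp add: d_def)
  then obtain t where kt: "k = d * t" by blast
  have t2: "t \<ge> 2"
  proof (rule ccontr)
    assume "\<not> t \<ge> 2"
    hence "t = 0 \<or> t = 1" by auto
    thus False using kt dk k_ge by auto
  qed
  have frd: "fr d = g" unfolding d_def
    by (rule fr_period; rule gcd_fix) (use m in auto)
  define H where "H = (\<Prod>a<d. fr a)"
  have "Fb = (\<Prod>a<k. fr a)" by (simp add: Fb_def)
  also have "\<dots> = (\<Prod>a<t * d. fr a)" by (simp add: kt mult.commute)
  also have "\<dots> = (\<Prod>i<t. prod fr {i * d..<i * d + d})"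
    by (rule prod.nat_group[symmetric])
  also have "\<dots> = (\<Prod>i<t. H)"
  proof (rule prod.cong[OF refl])
    fix i
    have "prod fr {i * d..<i * d + d} = prod fr {0 + i * d..<d + i * d}" by (simp add: add.commute)
    also have "\<dots> = prod (fr \<circ> plus (i * d)) {0..<d}" by (rule prod.atLeastLessThan_shift_bounds)
    also have "\<dots> = H" unfolding H_def
      by (intro prod.cong) (auto simp: atLeast0LessThan fr_mult_period[OF frd] mult.commute)
    finally show "prod fr {i * d..<i * d + d} = H" .
  qed
  also have "\<dots> = H ^ t" by simp
  finally have FbH: "Fb = H ^ t" .
  obtain H0 where H0: "map_poly emb H0 = H"
    unfolding H_def by (rule exE[OF descend], rule inv_coeffs, rule prod_inv[OF frd]) blast
  have "map_poly emb F0 = map_poly emb (H0 ^ t)"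
    unfolding F0 FbH H0[symmetric] by (simp add: map_poly_power_rh[OF emb_rhom])
  hence "F0 = H0 ^ t" by (rule map_emb_inj)
  moreover have "degree H0 > 0"
  proof -
    have "degree H = d * n" unfolding H_def
      by (subst degree_prod_eq_sum_degree) (simp_all add: fr_nz deg_fr)
    hence "degree H0 = d * n" using H0 deg_map_emb[of H0] by simp
    thus ?thesis using d0 n_gt by simp
  qed
  ultimately show ?thesis using not_irr_pow t2 by simp
qed


definition S :: "nat \<Rightarrow> 'b alg_closure \<Rightarrow> 'b alg_closure" where
  "S j z = z ^ (CARD('a) ^ j)"

lemma to_ac_rhom: "rhom (to_ac :: 'b \<Rightarrow> 'b alg_closure)"
  by (simp add: rhom_def)

lemma ie_rhom: "rhom (to_ac \<circ> emb)" by (rule rhom_comp[OF to_ac_rhom emb_rhom])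

lemma ZO: "0 < i \<Longrightarrow> i < CARD('a) \<Longrightarrow> of_nat (CARD('a) choose i) = (0::'b alg_closure)"
  using Zb[of i] by (metis to_ac_of_nat to_ac_0)

lemma S_rhom: "rhom (S j)"
  unfolding S_def[abs_def] by (rule rhom_pow_Z[OF ZO q0])

lemma S_add: "S (a + b) z = S b (S a z)"
  by (simp add: S_def power_add power_mult)

lemma S_comm: "S a (S b z) = S b (S a z)"
  using S_add[of a b z] S_add[of b a z] by (simp add: add.commute)

lemma S_0 [simp]: "S 0 z = z" by (simp add: S_def)

lemma S_inj: "S j z = S j w \<Longrightarrow> z = w"
  unfolding S_def by (rule pow_inj_gen[OF S_rhom[unfolded S_def[abs_def]]]) (simp_all add: q0)

lemma S_surj: "\<exists>w. S j w = z"
  unfolding S_def using nth_root_exists[of "CARD('a) ^ j" z] q0 by auto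

lemma S_zero [simp]: "S j 0 = 0" using rh_zero[OF S_rhom] .

lemma S_eq0: "S j z = 0 \<longleftrightarrow> z = 0" using S_inj[of j z 0] by auto

lemma S_to_ac_k: "S (k * t) (to_ac x) = to_ac x"
  by (simp add: S_def pow_qkt flip: to_ac_power)

lemma S_ie: "S j (to_ac (emb c)) = to_ac (emb c)"
  by (simp add: S_def pow_emb flip: to_ac_power)

lemma S_to_ac: "S j (to_ac x) = to_ac (x ^ (CARD('a) ^ j))"
  by (simp add: S_def)

lemma map_S_ie: "map_poly (S j) (map_poly (to_ac \<circ> emb) p) = map_poly (to_ac \<circ> emb) p"
  by (subst map_poly_map_poly) (simp_all add: o_def S_ie emb_0)

lemma poly_S_ie: "poly (map_poly (to_ac \<circ> emb) p) (S j z) = S j (poly (map_poly (to_ac \<circ> emb) p) z)"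
  using poly_map_poly_rh[OF S_rhom, of j "map_poly (to_ac \<circ> emb) p" z] by (simp add: map_S_ie)

lemma descend_O:
  fixes p :: "'b alg_closure poly"
  assumes "map_poly (S 1) p = p"
  shows "\<exists>p0. map_poly (to_ac \<circ> emb) p0 = p"
proof (rule descend_gen[OF ie_rhom])
  fix i
  have "coeff (map_poly (S 1) p) i = coeff p i" using assms by simp
  thus "coeff p i ^ CARD('a) = coeff p i" by (simp add: coeff_map_poly S_def)
qed

definition f' where "f' = map_poly (to_ac \<circ> emb) f"

lemma deg_f': "degree f' = n"
  unfolding f'_def by (subst degree_map_poly) (simp_all add: emb_eq0 deg)

lemma f'_nz: "f' \<noteq> 0" using deg_f' n_gt by auto

lemma root_S: "poly f' z = 0 \<Longrightarrow> poly f' (S j z) = 0"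
  unfolding f'_def by (simp add: poly_S_ie)

lemma S_mult_fix: "S d z = z \<Longrightarrow> S (d * t) z = z"
  by (induction t) (simp_all add: S_add)

lemma S_diff_fix: "S i z = S i' z \<Longrightarrow> i < i' \<Longrightarrow> S (i' - i) z = z"
  using S_add[of i "i' - i" z] S_comm[of "i' - i" i z] by (auto dest: S_inj)

lemma orbit_root:
  assumes r: "poly f' \<theta> = 0"
  shows "S j \<theta> = \<theta> \<longleftrightarrow> n dvd j"
proof -
  define R where "R = {z. poly f' z = 0}"
  have finR: "finite R" unfolding R_def by (rule poly_roots_finite[OF f'_nz])
  have cardR: "card R \<le> n" unfolding R_def using card_poly_roots_bound[OF f'_nz] deg_f' by simp
  have orbR: "S i \<theta> \<in> R" for i unfolding R_def using root_S[OF r] by simp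
  have ex: "\<exists>d. 0 < d \<and> S d \<theta> = \<theta>"
  proof (rule ccontr)
    assume ne: "\<not> ?thesis"
    have "inj_on (\<lambda>i. S i \<theta>) {..n}"
    proof (rule inj_onI)
      fix i i' assume e: "S i \<theta> = S i' \<theta>" and "i \<in> {..n}" "i' \<in> {..n}"
      show "i = i'"
      proof (rule ccontr)
        assume "i \<noteq> i'"
        hence "i < i' \<or> i' < i" by auto
        thus False using S_diff_fix[OF e] S_diff_fix[OF e[symmetric]] ne zero_less_diff by metis
      qed
    qed
    hence "card ((\<lambda>i. S i \<theta>) ` {..n}) = Suc n" by (simp add: card_image)
    moreover have "card ((\<lambda>i. S i \<theta>) ` {..n}) \<le> card R"
      by (rule card_mono[OF finR]) (use orbR in auto)
    ultimately show False using cardR by simp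
  qed
  define d0 where "d0 = (LEAST d. 0 < d \<and> S d \<theta> = \<theta>)"
  have d0: "0 < d0" "S d0 \<theta> = \<theta>" using LeastI_ex[OF ex] unfolding d0_def by blast+
  have d0min: "\<And>d. 0 < d \<Longrightarrow> d < d0 \<Longrightarrow> S d \<theta> \<noteq> \<theta>"
    unfolding d0_def using not_less_Least by blast
  have iff: "S j \<theta> = \<theta> \<longleftrightarrow> d0 dvd j" for j
  proof -
    have jd: "j = d0 * (j div d0) + j mod d0" by simp
    have "S j \<theta> = S (j mod d0) (S (d0 * (j div d0)) \<theta>)"
      by (subst jd, subst S_add) rule
    also have "\<dots> = S (j mod d0) \<theta>" using S_mult_fix[OF d0(2)] by simp
    finally have e: "S j \<theta> = S (j mod d0) \<theta>" .
    show ?thesis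
    proof
      assume "S j \<theta> = \<theta>"
      hence "S (j mod d0) \<theta> = \<theta>" using e by simp
      hence "\<not> (0 < j mod d0)" using d0min[of "j mod d0"] d0(1) by auto
      thus "d0 dvd j" by (simp add: dvd_eq_mod_eq_0)
    next
      assume "d0 dvd j"
      thus "S j \<theta> = \<theta>" using e by (simp add: dvd_eq_mod_eq_0)
    qed
  qed
  have le1: "d0 \<le> n"
  proof -
    have "inj_on (\<lambda>i. S i \<theta>) {..<d0}"
    proof (rule inj_onI)
      fix i i' assume e: "S i \<theta> = S i' \<theta>" and i: "i \<in> {..<d0}" and i': "i' \<in> {..<d0}"
      show "i = i'"
      proof (rule ccontr)
        assume "i \<noteq> i'"
        hence "i < i' \<or> i' < i" by auto
        thus False using S_diff_fix[OF e] S_diff_fix[OF e[symmetric]] d0min i i' by force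
      qed
    qed
    hence "card ((\<lambda>i. S i \<theta>) ` {..<d0}) = d0" by (simp add: card_image)
    moreover have "card ((\<lambda>i. S i \<theta>) ` {..<d0}) \<le> card R"
      by (rule card_mono[OF finR]) (use orbR in auto)
    ultimately show ?thesis using cardR by simp
  qed
  have le2: "n \<le> d0"
  proof -
    define M where "M = (\<Prod>i<d0. [:- S i \<theta>, 1:])"
    have h1: "rhom (S 1)" by (rule S_rhom)
    have "map_poly (S 1) M = (\<Prod>i<d0. [:- S (Suc i) \<theta>, 1:])"
      unfolding M_def map_poly_prod_rh[OF h1]
    proof (rule prod.cong[OF refl])
      fix i
      have si: "S 1 (S i \<theta>) = S (Suc i) \<theta>" using S_add[of i 1 \<theta>] by simp
      have "map_poly (S 1) [:- S i \<theta>, 1:] = [:S 1 (- S i \<theta>), S 1 1:]"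
        by (simp only: map_poly_pCons_rh[OF h1] map_poly_0)
      also have "\<dots> = [:- S (Suc i) \<theta>, 1:]"
        by (simp only: rh_uminus[OF h1] rh_one[OF h1] si)
      finally show "map_poly (S 1) [:- S i \<theta>, 1:] = [:- S (Suc i) \<theta>, 1:]" .
    qed
    also have "\<dots> = M"
    proof -
      obtain d' where dd: "d0 = Suc d'" using d0(1) by (cases d0) auto
      have "(\<Prod>i<d0. [:- S (Suc i) \<theta>, 1:]) = (\<Prod>i<d'. [:- S (Suc i) \<theta>, 1:]) * [:- S d0 \<theta>, 1:]"
        by (simp add: dd)
      also have "\<dots> = [:- S 0 \<theta>, 1:] * (\<Prod>i<d'. [:- S (Suc i) \<theta>, 1:])"
        using d0(2) by (simp add: mult.commute)
      also have "\<dots> = M" unfolding M_def by (simp only: dd prod.lessThan_Suc_shift)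
      finally show ?thesis .
    qed
    finally obtain M0 where M0: "map_poly (to_ac \<circ> emb) M0 = M" using descend_O by blast
    have Mnz: "M \<noteq> 0" unfolding M_def by simp
    have degM: "degree M = d0" unfolding M_def
      by (subst degree_prod_eq_sum_degree) simp_all
    have rM: "poly M \<theta> = 0" unfolding M_def poly_prod using d0(1)
      by (intro prod_zero) (auto intro!: bexI[of _ 0])
    have M0nz: "M0 \<noteq> 0" using Mnz M0 by auto
    define ie where "ie = map_poly (to_ac \<circ> emb)"
    have ie_add: "ie (a + b) = ie a + ie b" for a b
      unfolding ie_def by (rule map_poly_add_rh[OF ie_rhom])
    have ie_mult: "ie (a * b) = ie a * ie b" for a b
      unfolding ie_def by (rule map_poly_mult_rh[OF ie_rhom])
    define Rt where "Rt = (\<lambda>p::'a poly. p \<noteq> 0 \<and> poly (ie p) \<theta> = 0)"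
    have RtM0: "Rt M0" unfolding Rt_def ie_def using M0nz M0 rM by simp
    obtain p0 where p0: "Rt p0" and p0min: "\<And>p. Rt p \<Longrightarrow> degree p0 \<le> degree p"
      using ex_has_least_nat[of Rt M0 degree] RtM0 by blast
    have Rtf: "Rt f" unfolding Rt_def ie_def using r irr f'_nz by (auto simp: f'_def)
    have "f mod p0 = 0"
    proof (rule ccontr)
      assume nz: "f mod p0 \<noteq> 0"
      have "poly (ie f) \<theta> = poly (ie (f div p0 * p0 + f mod p0)) \<theta>" by simp
      also have "\<dots> = poly (ie (f div p0)) \<theta> * poly (ie p0) \<theta> + poly (ie (f mod p0)) \<theta>"
        by (simp only: ie_add ie_mult poly_add poly_mult)
      finally have "poly (ie (f mod p0)) \<theta> = 0" using Rtf p0 unfolding Rt_def by simp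
      hence "Rt (f mod p0)" using nz unfolding Rt_def by simp
      hence "degree p0 \<le> degree (f mod p0)" by (rule p0min)
      moreover have "degree (f mod p0) < degree p0" using p0 nz unfolding Rt_def
        by (intro degree_mod_less') auto
      ultimately show False by simp
    qed
    hence "p0 dvd f" by (simp add: mod_eq_0_iff_dvd)
    then obtain c where fc: "f = p0 * c" by blast
    have "\<not> is_unit p0"
    proof
      assume "is_unit p0"
      hence "degree p0 = 0" using p0 unfolding Rt_def by (simp add: is_unit_iff_degree)
      then obtain a where "p0 = [:a:]" by (rule degree_eq_zeroE)
      thus False using p0 unfolding Rt_def ie_def by (simp add: map_poly_pCons emb_0 emb_eq0)
    qed
    hence "is_unit c" using Factorial_Ring.irreducibleD[OF irr fc] by blast
    moreover have "c \<noteq> 0" using fc irr by auto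
    ultimately have "degree c = 0" by (simp add: is_unit_iff_degree)
    hence "degree f = degree p0" using fc p0 \<open>c \<noteq> 0\<close> unfolding Rt_def by (simp add: degree_mult_eq)
    moreover have "degree p0 \<le> degree M0" by (rule p0min[OF RtM0])
    ultimately have "degree f \<le> degree M0" by simp
    moreover have "degree M0 = degree M" unfolding M0[symmetric]
      by (subst degree_map_poly) (simp_all add: emb_eq0)
    ultimately show ?thesis using deg degM by simp
  qed
  show ?thesis using iff[of j] le1 le2 by simp
qed


definition g' where "g' = map_poly to_ac g"

lemma root_g_f:
  assumes "poly g' w = 0" shows "poly f' (to_ac \<alpha> * w + to_ac \<beta>) = 0"
proof -
  have "map_poly to_ac (map_poly emb f) = f'"
    unfolding f'_def by (subst map_poly_map_poly) (simp_all add: o_def emb_0)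
  moreover have "map_poly to_ac [:\<beta>, \<alpha>:] = [:to_ac \<beta>, to_ac \<alpha>:]"
    by (simp add: map_poly_pCons_rh[OF to_ac_rhom])
  ultimately have "g' = pcompose f' [:to_ac \<beta>, to_ac \<alpha>:]"
    unfolding g'_def g_def by (simp add: map_poly_pcompose_rh[OF to_ac_rhom])
  thus ?thesis using assms by (simp add: poly_pcompose algebra_simps)
qed

lemma cover:
  assumes r: "poly f' \<theta> = 0"
  shows "\<exists>l. S m \<theta> = S (k * l) \<theta>"
proof -
  have "gcd k n = 1" using cop by (simp add: coprime_commute)
  then obtain x y where xy: "k * x = n * y + 1" using bezout_nat[of k n] k_ge by auto
  have "k * (x * m) = n * (y * m) + m"
  proof -
    have "k * x * m = (n * y + 1) * m" using xy by simp
    thus ?thesis by (simp add: algebra_simps)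
  qed
  hence "S (k * (x * m)) \<theta> = S m (S (n * (y * m)) \<theta>)" by (simp add: S_add)
  also have "S (n * (y * m)) \<theta> = \<theta>" using orbit_root[OF r] by simp
  finally show ?thesis by metis
qed

lemma claimC:
  assumes nP: "\<not> P" and w: "poly g' w = 0" and jw: "S j w = w"
  shows "n * k dvd j"
proof -
  define a where "a = to_ac \<alpha>"
  define b where "b = to_ac \<beta>"
  define \<theta> where "\<theta> = a * w + b"
  have r: "poly f' \<theta> = 0" unfolding \<theta>_def a_def b_def by (rule root_g_f[OF w])
  have a0: "a \<noteq> 0" unfolding a_def using alpha_nz by simp
  have fa: "S (k * l) a = a" "S (k * l) b = b" for l unfolding a_def b_def by (rule S_to_ac_k)+
  define lam where "lam = S j a / a"
  define mu where "mu = S j b - lam * b"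
  have la: "lam * a = S j a" unfolding lam_def using a0 by simp
  have E: "S j (S m \<theta>) = lam * S m \<theta> + mu" for m
  proof -
    obtain l where l: "S m \<theta> = S (k * l) \<theta>" using cover[OF r] by blast
    define W where "W = S (k * l) w"
    have h: "rhom (S (k * l))" "rhom (S j)" by (rule S_rhom)+
    have t1: "S (k * l) \<theta> = a * W + b"
      unfolding \<theta>_def W_def by (simp add: rh_add[OF h(1)] rh_mult[OF h(1)] fa)
    have "S j W = W" unfolding W_def using jw by (simp add: S_comm[of j])
    hence "S j (S (k * l) \<theta>) = S j a * W + S j b"
      unfolding t1 by (simp add: rh_add[OF h(2)] rh_mult[OF h(2)])
    also have "\<dots> = lam * (a * W + b) + mu" unfolding mu_def la[symmetric] by (simp add: algebra_simps)
    finally show ?thesis using l t1 by simp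
  qed
  have h1: "rhom (S 1)" by (rule S_rhom)
  have Sn: "S n \<theta> = \<theta>" using orbit_root[OF r] by simp
  have S1ne: "S 1 \<theta> \<noteq> \<theta>" using orbit_root[OF r, of 1] n_gt by simp
  have key: "(S 1 lam - lam) * S (Suc m) \<theta> = mu - S 1 mu" for m
  proof -
    have "S 1 (S j (S m \<theta>)) = S j (S (Suc m) \<theta>)"
      using S_comm[of 1 j] S_add[of m 1 \<theta>] by simp
    also have "\<dots> = lam * S (Suc m) \<theta> + mu" by (rule E)
    finally have "S 1 (lam * S m \<theta> + mu) = lam * S (Suc m) \<theta> + mu" using E by simp
    moreover have "S 1 (lam * S m \<theta> + mu) = S 1 lam * S (Suc m) \<theta> + S 1 mu"
      using S_add[of m 1 \<theta>] rh_add[OF h1] rh_mult[OF h1] by simp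
    ultimately show ?thesis by (simp add: algebra_simps)
  qed
  have "(S 1 lam - lam) * S 1 \<theta> = (S 1 lam - lam) * \<theta>"
    using key[of 0] key[of "n - 1"] Sn n_gt by simp
  hence "(S 1 lam - lam) * (S 1 \<theta> - \<theta>) = 0" by (simp add: algebra_simps)
  hence S1l: "S 1 lam = lam" using S1ne by simp
  hence S1m: "S 1 mu = mu" using key[of 0] by simp
  have Sl: "S i lam = lam" for i
  proof (induction i)
    case (Suc i) thus ?case using S_add[of i 1 lam] S1l by simp
  qed simp
  have Sm: "S i mu = mu" for i
  proof (induction i)
    case (Suc i) thus ?case using S_add[of i 1 mu] S1m by simp
  qed simp
  have D: "S (j * l) (S m \<theta>) - S (j * l) (S m' \<theta>) = lam ^ l * (S m \<theta> - S m' \<theta>)" for l m m'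
  proof (induction l)
    case 0 thus ?case by simp
  next
    case (Suc l)
    have st: "S (j * Suc l) (S x \<theta>) = lam * S (j * l) (S x \<theta>) + mu" for x
    proof -
      have "S (j * Suc l) (S x \<theta>) = S ((x + j * l) + j) \<theta>"
        using S_add[of x "j * Suc l" \<theta>] by (simp add: algebra_simps)
      also have "\<dots> = S j (S (x + j * l) \<theta>)" by (rule S_add)
      also have "\<dots> = lam * S (x + j * l) \<theta> + mu" by (rule E)
      finally show ?thesis by (simp only: S_add)
    qed
    have "(lam * S (j * l) (S m \<theta>) + mu) - (lam * S (j * l) (S m' \<theta>) + mu)
        = lam * (S (j * l) (S m \<theta>) - S (j * l) (S m' \<theta>))" by (simp add: right_diff_distrib)
    also have "\<dots> = lam ^ Suc l * (S m \<theta> - S m' \<theta>)" using Suc.IH by simp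
    finally show ?case unfolding st .
  qed
  have ln: "lam ^ n = 1"
  proof -
    have "S (j * n) (S 1 \<theta>) = S 1 \<theta>"
      using S_comm[of "j * n" 1 \<theta>] orbit_root[OF r, of "j * n"] by simp
    moreover have "S (j * n) (S 0 \<theta>) = S 0 \<theta>" using orbit_root[OF r, of "j * n"] by simp
    ultimately have "S 1 \<theta> - \<theta> = lam ^ n * (S 1 \<theta> - \<theta>)" using D[of n 1 0] by simp
    hence "(lam ^ n - 1) * (S 1 \<theta> - \<theta>) = 0" by (simp add: algebra_simps)
    thus ?thesis using S1ne by simp
  qed
  have Sal: "S (j * l) a = lam ^ l * a" for l
  proof (induction l)
    case 0 thus ?case by simp
  next
    case (Suc l)
    have h: "rhom (S j)" by (rule S_rhom)
    have "S (j * Suc l) a = S j (S (j * l) a)" by (simp add: S_add[symmetric] add.commute)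
    also have "\<dots> = lam ^ l * (lam * a)" unfolding Suc
      by (simp add: rh_mult[OF h] rh_power[OF h] Sl la)
    finally show ?case by simp
  qed
  have lk: "lam ^ k = 1"
  proof -
    have "lam ^ k * a = a" using Sal[of k] fa(1)[of j] by (simp add: mult.commute)
    hence "(lam ^ k - 1) * a = 0" by (simp add: algebra_simps)
    thus ?thesis using a0 by simp
  qed
  obtain x y where xy: "n * x = k * y + 1"
    using bezout_nat[of n k] n_gt cop by auto
  have l1: "lam = 1"
  proof -
    have "lam = lam ^ (k * y + 1)" using lk by (simp add: power_mult)
    also have "\<dots> = lam ^ (n * x)" using xy by simp
    also have "\<dots> = 1" using ln by (simp add: power_mult)
    finally show ?thesis .
  qed
  have Sth: "S (j * l) \<theta> = \<theta> + of_nat l * mu" for l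
  proof (induction l)
    case 0 thus ?case by simp
  next
    case (Suc l)
    have "S (j * Suc l) \<theta> = S j (S (j * l) \<theta>)" by (simp add: S_add[symmetric] add.commute)
    also have "\<dots> = S (j * l) \<theta> + mu" using E[of "j * l"] l1 by simp
    finally show ?case using Suc by (simp add: algebra_simps)
  qed
  have nm: "of_nat n * mu = 0" using Sth[of n] orbit_root[OF r, of "j * n"] by simp
  have Sb1: "S j b = b + mu" unfolding mu_def l1 by simp
  have Sbl: "S (j * l) b = b + of_nat l * mu" for l
  proof (induction l)
    case 0 thus ?case by simp
  next
    case (Suc l)
    have h: "rhom (S j)" by (rule S_rhom)
    have "S (j * Suc l) b = S j (S (j * l) b)" by (simp add: S_add[symmetric] add.commute)
    also have "\<dots> = b + mu + of_nat l * mu" unfolding Suc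
      by (simp add: rh_add[OF h] rh_mult[OF h] rh_of_nat[OF h] Sm Sb1)
    finally show ?case by (simp add: algebra_simps)
  qed
  have km: "of_nat k * mu = 0" using Sbl[of k] fa(2)[of j] by (simp add: mult.commute)
  have m0: "mu = 0"
  proof -
    have z1: "of_nat (n * x) * mu = of_nat x * (of_nat n * mu)" by (simp add: algebra_simps)
    have z2: "of_nat (k * y) * mu = of_nat y * (of_nat k * mu)" by (simp add: algebra_simps)
    have "mu = of_nat (n * x) * mu - of_nat (k * y) * mu" using xy by (simp add: algebra_simps)
    also have "\<dots> = 0" unfolding z1 z2 nm km by simp
    finally show ?thesis .
  qed
  have Sja: "S j a = a" using la l1 by simp
  have Sjb: "S j b = b" using Sb1 m0 by simp
  have "S j \<theta> = \<theta>" using E[of 0] l1 m0 by simp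
  hence nj: "n dvd j" using orbit_root[OF r] by simp
  have ap: "\<alpha> ^ (CARD('a) ^ j) = \<alpha>" using Sja unfolding a_def by (simp only: S_to_ac to_ac_eq_iff)
  have bp: "\<beta> ^ (CARD('a) ^ j) = \<beta>" using Sjb unfolding b_def by (simp only: S_to_ac to_ac_eq_iff)
  have kj: "k dvd j"
  proof (rule ccontr)
    assume nd: "\<not> k dvd j"
    define r' where "r' = j mod k"
    have r0: "0 < r'" using nd unfolding r'_def by (simp add: dvd_eq_mod_eq_0)
    have rk: "r' < k" unfolding r'_def using k_ge by simp
    have jj: "j = k * (j div k) + r'" unfolding r'_def by simp
    have "\<alpha> ^ (CARD('a) ^ r') = \<alpha>" using ap by (subst (asm) jj, simp only: pow_q_add pow_qkt)
    moreover have "\<beta> ^ (CARD('a) ^ r') = \<beta>" using bp by (subst (asm) jj, simp only: pow_q_add pow_qkt)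
    ultimately have "P" unfolding P_def using r0 rk by blast
    thus False using nP by simp
  qed
  show ?thesis by (rule divides_mult[OF nj kj cop])
qed


lemma map_fr_S: "map_poly to_ac (fr a) = map_poly (S a) g'"
proof -
  have "map_poly to_ac (fr a) = map_poly (to_ac \<circ> (\<lambda>c. c ^ (CARD('a) ^ a))) g"
    unfolding fr_def2 by (subst map_poly_map_poly) (simp_all add: q0)
  also have "\<dots> = map_poly (S a \<circ> to_ac) g" by (simp add: o_def S_def)
  also have "\<dots> = map_poly (S a) g'"
    unfolding g'_def by (subst map_poly_map_poly) simp_all
  finally show ?thesis .
qed

lemma deg_div:
  assumes nP: "\<not> P" and F0: "map_poly emb F0 = Fb" and ud: "u dvd F0" and du: "degree u > 0"
  shows "n * k \<le> degree u"
proof -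
  define u' where "u' = map_poly (to_ac \<circ> emb) u"
  have du': "degree u' = degree u" unfolding u'_def
    by (subst degree_map_poly) (simp_all add: emb_eq0)
  obtain z where z: "poly u' z = 0" using alg_closed_imp_poly_has_root[of u'] du du' by auto
  obtain v where uv: "F0 = u * v" using ud by blast
  have "map_poly (to_ac \<circ> emb) F0 = u' * map_poly (to_ac \<circ> emb) v"
    unfolding u'_def uv by (rule map_poly_mult_rh[OF ie_rhom])
  hence pz: "poly (map_poly (to_ac \<circ> emb) F0) z = 0" using z by simp
  have "map_poly (to_ac \<circ> emb) F0 = map_poly to_ac Fb"
    unfolding F0[symmetric] by (subst map_poly_map_poly) (simp_all add: emb_0)
  also have "\<dots> = (\<Prod>a<k. map_poly (S a) g')"
    unfolding Fb_def by (simp add: map_poly_prod_rh[OF to_ac_rhom] map_fr_S)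
  finally have "(\<Prod>a<k. poly (map_poly (S a) g') z) = 0" using pz by (simp add: poly_prod)
  then obtain a where "poly (map_poly (S a) g') z = 0" by (auto simp: prod_zero_iff)
  moreover obtain w where wz: "S a w = z" using S_surj by blast
  ultimately have "S a (poly g' w) = 0" using poly_map_poly_rh[OF S_rhom, of a g' w] by simp
  hence w: "poly g' w = 0" by (simp add: S_eq0)
  have inj: "inj_on (\<lambda>i. S i z) {..<n * k}"
  proof (rule inj_onI, rule ccontr)
    fix i i' assume e: "S i z = S i' z" and i: "i \<in> {..<n * k}" and i': "i' \<in> {..<n * k}" and ne: "i \<noteq> i'"
    have "\<exists>d. 0 < d \<and> d < n * k \<and> S d z = z"
    proof (cases "i < i'")
      case True thus ?thesis using S_diff_fix[OF e True] i' by (intro exI[of _ "i' - i"]) auto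
    next
      case False hence "i' < i" using ne by simp
      thus ?thesis using S_diff_fix[OF e[symmetric]] i by (intro exI[of _ "i - i'"]) auto
    qed
    then obtain d where d: "0 < d" "d < n * k" "S d z = z" by blast
    have "S a (S d w) = S a w" using d(3) wz S_comm[of a d w] by simp
    hence "S d w = w" by (rule S_inj)
    hence "n * k dvd d" by (rule claimC[OF nP w])
    thus False using d(1,2) by (meson nat_dvd_not_less)
  qed
  have roots: "(\<lambda>i. S i z) ` {..<n * k} \<subseteq> {x. poly u' x = 0}"
    using z by (auto simp: u'_def poly_S_ie)
  have u'nz: "u' \<noteq> 0" using du du' by auto
  have "n * k = card ((\<lambda>i. S i z) ` {..<n * k})" using inj by (simp add: card_image)
  also have "\<dots> \<le> card {x. poly u' x = 0}" by (rule card_mono[OF poly_roots_finite[OF u'nz] roots])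
  also have "\<dots> \<le> degree u'" by (rule card_poly_roots_bound[OF u'nz])
  finally show ?thesis using du' by simp
qed

lemma irr_F0:
  assumes nP: "\<not> P" and F0: "map_poly emb F0 = Fb"
  shows "irreducible F0"
proof (rule Factorial_Ring.irreducibleI)
  have dF: "degree F0 = n * k" using deg_map_emb[of F0] F0 deg_Fb by simp
  show F0nz: "F0 \<noteq> 0" using F0 Fb_nz by auto
  show "\<not> F0 dvd 1" using dF F0nz n_gt k_ge by (simp add: is_unit_iff_degree)
  fix a b assume ab: "F0 = a * b"
  have a0: "a \<noteq> 0" and b0: "b \<noteq> 0" using ab F0nz by auto
  show "a dvd 1 \<or> b dvd 1"
  proof (cases "degree a = 0")
    case True thus ?thesis using a0 by (simp add: is_unit_iff_degree)
  next
    case False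
    have "n * k \<le> degree a" by (rule deg_div[OF nP F0]) (use ab False in auto)
    moreover have "degree F0 = degree a + degree b" using ab a0 b0 by (simp add: degree_mult_eq)
    ultimately have "degree b = 0" using dF by simp
    thus ?thesis using b0 by (simp add: is_unit_iff_degree)
  qed
qed

end

theorem theorem1:
  fixes emb :: "'a::{field,finite} \<Rightarrow> 'b::{field,finite}"
    and f :: "'a poly" and n k :: nat and \<alpha> \<beta> :: 'b
  assumes emb_add: "\<And>x y. emb (x + y) = emb x + emb y"
    and emb_mult: "\<And>x y. emb (x * y) = emb x * emb y"
    and emb_one: "emb 1 = 1"
    and card_b: "CARD('b) = CARD('a) ^ k"
    and n_gt: "n > 1" and k_ge: "k \<ge> 1" and cop: "coprime n k"
    and irr: "irreducible f" and deg: "degree f = n"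
    and alpha_nz: "\<alpha> \<noteq> 0"
  shows "let g = pcompose (map_poly emb f) [:\<beta>, \<alpha>:];
             F = (\<Prod>a<k. frob_poly CARD('a) a g)
         in \<exists>F0 :: 'a poly. map_poly emb F0 = F \<and> degree F0 = n * k \<and>
              (irreducible F0 \<longleftrightarrow>
                 gen_subfield (range emb \<union> {\<alpha>, \<beta>}) = UNIV)"
proof -
  interpret X: ffs emb f n k \<alpha> \<beta>
    using emb_add emb_mult emb_one card_b n_gt k_ge cop irr deg alpha_nz by unfold_locales auto
  have gdef: "pcompose (map_poly emb f) [:\<beta>, \<alpha>:] = X.g" by (simp add: X.g_def)
  have Fdef: "(\<Prod>a<k. frob_poly CARD('a) a X.g) = X.Fb" by (simp add: X.Fb_def X.fr_def)
  obtain F0 where F0: "map_poly emb F0 = X.Fb" using X.Fb_descend by blast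
  have dF: "degree F0 = n * k" using X.deg_map_emb[of F0] F0 X.deg_Fb by simp
  have "irreducible F0 \<longleftrightarrow> \<not> X.P" using X.P_red[OF F0] X.irr_F0[OF _ F0] by blast
  also have "\<dots> \<longleftrightarrow> X.L = UNIV" using X.L_iff by simp
  finally have "irreducible F0 \<longleftrightarrow> gen_subfield (range emb \<union> {\<alpha>, \<beta>}) = UNIV"
    by (simp add: X.L_def)
  thus ?thesis unfolding Let_def gdef Fdef using F0 dF by blast
qed

end
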